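(* For every LTL formula $\varphi$ in positive normal form, $\Theta(\mathrm{LF}(\varphi)) \Leftrightarrow \varphi$.
   Context: LTL formulae in positive normal form (PNF) over a finite set $AP$ of atomic propositions: $\varphi,\psi ::= p \mid \neg p \mid \mathbf{tt} \mid \mathbf{ff} \mid \varphi\wedge\psi \mid \varphi\vee\psi \mid \bigcirc\varphi \mid \varphi\,\mathcal{U}\,\psi \mid \varphi\,\mathcal{R}\,\psi$, interpreted over infinite words $\sigma\in\Sigma^\omega$ with an interpretation $I:\Sigma\to\mathcal{P}(AP)$ in the standard way ($\bigcirc$ = next, $\mathcal{U}$ = until, $\mathcal{R}$ = release). A temporal formula is one not starting with a conjunction or disjunction. A literal $\ell$ is an element of $AP\cup\neg AP$. A monomial $\mu,\nu$ is either $\mathbf{ff}$ or a set of literals not containing both $\ell$ and $\neg\ell$; $\Theta(\mu)=\mathbf{ff}$ if $\mu=\mathbf{ff}$, otherwise $\Theta(\mu)=\bigwedge\mu$ (so the empty monomial, written $\mathbf{tt}$, has $\Theta=\mathbf{tt}$). Smart conjunction $\mu\sqcap\nu$ is $\mathbf{ff}$ if either is $\mathbf{ff}$ or if $\mu\cup\nu$ contains some $\ell$ and $\neg\ell$, and $\mu\cup\nu$ otherwise. $\varphi\,\dot\wedge\,\psi$ denotes formal conjunction of temporal formulae, normalized modulo associativity, commutativity and idempotence using a fixed total order on formulae ($\mathbf{tt}$ is the empty formal conjunction). $\mathrm{simp}(\varphi\wedge\psi)=\{\varphi'\,\dot\wedge\,\psi' \mid \varphi'\in\mathrm{simp}(\varphi),\psi'\in\mathrm{simp}(\psi)\}$,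 $\mathrm{simp}(\varphi\vee\psi)=\mathrm{simp}(\varphi)\cup\mathrm{simp}(\psi)$, $\mathrm{simp}(\varphi)=\{\varphi\}$ for temporal $\varphi$. Linear factors: $\mathrm{LF}(\ell)=\{\langle\{\ell\},\mathbf{tt}\rangle\}$; $\mathrm{LF}(\mathbf{tt})=\{\langle\mathbf{tt},\mathbf{tt}\rangle\}$; $\mathrm{LF}(\mathbf{ff})=\{\}$; $\mathrm{LF}(\varphi\vee\psi)=\mathrm{LF}(\varphi)\cup\mathrm{LF}(\psi)$; $\mathrm{LF}(\varphi\wedge\psi)=\{\langle\mu\sqcap\nu,\varphi'\,\dot\wedge\,\psi'\rangle \mid \langle\mu,\varphi'\rangle\in\mathrm{LF}(\varphi),\langle\nu,\psi'\rangle\in\mathrm{LF}(\psi),\mu\sqcap\nu\neq\mathbf{ff}\}$; $\mathrm{LF}(\bigcirc\varphi)=\{\langle\mathbf{tt},\varphi'\rangle\mid\varphi'\in\mathrm{simp}(\varphi)\}$; $\mathrm{LF}(\varphi\,\mathcal{U}\,\psi)=\mathrm{LF}(\psi)\cup\{\langle\mu,\varphi'\,\dot\wedge\,(\varphi\,\mathcal{U}\,\psi)\rangle\mid\langle\mu,\varphi'\rangle\in\mathrm{LF}(\varphi)\}$; $\mathrm{LF}(\varphi\,\mathcal{R}\,\psi)=\{\langle\mu\sqcap\nu,\varphi'\,\dot\wedge\,\psi'\rangle\mid\langle\mu,\varphi'\rangle\in\mathrm{LF}(\varphi),\langle\nu,\psi'\rangle\in\mathrm{LF}(\psi),\mu\sqcap\nu\neq\mathbf{ff}\}\cup\{\langle\nu,\psi'\,\dot\wedge\,(\varphi\,\mathcal{R}\,\psi)\rangle\mid\langle\nu,\psi'\rangle\in\mathrm{LF}(\psi)\}$.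 For a set of linear factors, $\Theta(\{\langle\mu_i,\varphi_i\rangle\mid i\in I\})=\bigvee_{i\in I}(\Theta(\mu_i)\wedge\bigcirc\varphi_i)$. *)

theory Defs
  imports Main
begin

datatype 'a ltl =
    Prop 'a
  | NProp 'a
  | TT
  | FF
  | And "'a ltl" "'a ltl"
  | Or "'a ltl" "'a ltl"
  | Next "'a ltl"
  | Until "'a ltl" "'a ltl"
  | Release "'a ltl" "'a ltl"

definition suffix :: "nat \<Rightarrow> (nat \<Rightarrow> 's) \<Rightarrow> (nat \<Rightarrow> 's)" where
  "suffix k \<sigma> = (\<lambda>i. \<sigma> (i + k))"

fun sat :: "('s \<Rightarrow> 'a set) \<Rightarrow> (nat \<Rightarrow> 's) \<Rightarrow> 'a ltl \<Rightarrow> bool" where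
  "sat I \<sigma> (Prop p) = (p \<in> I (\<sigma> 0))"
| "sat I \<sigma> (NProp p) = (p \<notin> I (\<sigma> 0))"
| "sat I \<sigma> TT = True"
| "sat I \<sigma> FF = False"
| "sat I \<sigma> (And \<phi> \<psi>) = (sat I \<sigma> \<phi> \<and> sat I \<sigma> \<psi>)"
| "sat I \<sigma> (Or \<phi> \<psi>) = (sat I \<sigma> \<phi> \<or> sat I \<sigma> \<psi>)"
| "sat I \<sigma> (Next \<phi>) = sat I (suffix 1 \<sigma>) \<phi>"
| "sat I \<sigma> (Until \<phi> \<psi>) =
     (\<exists>j. sat I (suffix j \<sigma>) \<psi> \<and> (\<forall>k<j. sat I (suffix k \<sigma>) \<phi>))"
| "sat I \<sigma> (Release \<phi> \<psi>) =
     (\<forall>j. sat I (suffix j \<sigma>) \<psi> \<or> (\<exists>k<j. sat I (suffix k \<sigma>) \<phi>))"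

datatype 'a lit = Pos 'a | Neg 'a

fun lit_formula :: "'a lit \<Rightarrow> 'a ltl" where
  "lit_formula (Pos p) = Prop p"
| "lit_formula (Neg p) = NProp p"

fun neg_lit :: "'a lit \<Rightarrow> 'a lit" where
  "neg_lit (Pos p) = Neg p"
| "neg_lit (Neg p) = Pos p"

text \<open>A monomial is ff (None) or a set of literals (Some L); the empty set is tt.\<close>
type_synonym 'a monomial = "'a lit set option"

fun smart_conj :: "'a monomial \<Rightarrow> 'a monomial \<Rightarrow> 'a monomial" where
  "smart_conj None _ = None"
| "smart_conj _ None = None"
| "smart_conj (Some L) (Some M) =
     (if \<exists>l \<in> L \<union> M. neg_lit l \<in> L \<union> M then None else Some (L \<union> M))"

text \<open>A formal conjunction of temporal formulae, normalized modulo associativity,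
  commutativity and idempotence, is represented canonically by the finite set of its
  conjuncts; tt is the empty formal conjunction.\<close>
type_synonym 'a fconj = "'a ltl set"

fun temporal :: "'a ltl \<Rightarrow> bool" where
  "temporal (And _ _) = False"
| "temporal (Or _ _) = False"
| "temporal _ = True"

definition fc :: "'a ltl \<Rightarrow> 'a fconj" where
  "fc \<phi> = (if \<phi> = TT then {} else {\<phi>})"

fun simp_ltl :: "'a ltl \<Rightarrow> 'a fconj set" where
  "simp_ltl (And \<phi> \<psi>) = {A \<union> B | A B. A \<in> simp_ltl \<phi> \<and> B \<in> simp_ltl \<psi>}"
| "simp_ltl (Or \<phi> \<psi>) = simp_ltl \<phi> \<union> simp_ltl \<psi>"
| "simp_ltl \<phi> = {fc \<phi>}"

primrec LF :: "'a ltl \<Rightarrow> ('a monomial \<times> 'a fconj) set" where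
  "LF (Prop p) = {(Some {Pos p}, {})}"
| "LF (NProp p) = {(Some {Neg p}, {})}"
| "LF TT = {(Some {}, {})}"
| "LF FF = {}"
| "LF (Or \<phi> \<psi>) = LF \<phi> \<union> LF \<psi>"
| "LF (And \<phi> \<psi>) = {(smart_conj \<mu> \<nu>, A \<union> B) | \<mu> A \<nu> B.
        (\<mu>, A) \<in> LF \<phi> \<and> (\<nu>, B) \<in> LF \<psi> \<and> smart_conj \<mu> \<nu> \<noteq> None}"
| "LF (Next \<phi>) = {(Some {}, A) | A. A \<in> simp_ltl \<phi>}"
| "LF (Until \<phi> \<psi>) = LF \<psi> \<union> {(\<mu>, A \<union> {Until \<phi> \<psi>}) | \<mu> A. (\<mu>, A) \<in> LF \<phi>}"
| "LF (Release \<phi> \<psi>) = {(smart_conj \<mu> \<nu>, A \<union> B) | \<mu> A \<nu> B.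
        (\<mu>, A) \<in> LF \<phi> \<and> (\<nu>, B) \<in> LF \<psi> \<and> smart_conj \<mu> \<nu> \<noteq> None}
     \<union> {(\<nu>, B \<union> {Release \<phi> \<psi>}) | \<nu> B. (\<nu>, B) \<in> LF \<psi>}"

fun big_and :: "'a ltl list \<Rightarrow> 'a ltl" where
  "big_and [] = TT"
| "big_and [\<phi>] = \<phi>"
| "big_and (\<phi> # \<phi>s) = And \<phi> (big_and \<phi>s)"

fun big_or :: "'a ltl list \<Rightarrow> 'a ltl" where
  "big_or [] = FF"
| "big_or [\<phi>] = \<phi>"
| "big_or (\<phi> # \<phi>s) = Or \<phi> (big_or \<phi>s)"

text \<open>Some enumeration of a finite set (the choice is irrelevant semantically).\<close>
definition enum_set :: "'b set \<Rightarrow> 'b list" where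
  "enum_set S = (SOME xs. set xs = S)"

definition conj_formula :: "'a fconj \<Rightarrow> 'a ltl" where
  "conj_formula A = big_and (enum_set A)"

fun Theta_mono :: "'a monomial \<Rightarrow> 'a ltl" where
  "Theta_mono None = FF"
| "Theta_mono (Some L) = big_and (map lit_formula (enum_set L))"

definition Theta_LF :: "('a monomial \<times> 'a fconj) set \<Rightarrow> 'a ltl" where
  "Theta_LF S = big_or (map (\<lambda>(\<mu>, A). And (Theta_mono \<mu>) (Next (conj_formula A))) (enum_set S))"

end

theory Submission
  imports Defs
begin

lemma sat_big_and: "sat I \<sigma> (big_and xs) = (\<forall>x\<in>set xs. sat I \<sigma> x)"
  by (induction xs rule: big_and.induct) auto

lemma sat_big_or: "sat I \<sigma> (big_or xs) = (\<exists>x\<in>set xs. sat I \<sigma> x)"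
  by (induction xs rule: big_or.induct) auto

lemma enum_set_ok: "finite S \<Longrightarrow> set (enum_set S) = S"
  unfolding enum_set_def by (rule someI_ex) (rule finite_list)

fun mono_sat :: "('s \<Rightarrow> 'a set) \<Rightarrow> (nat \<Rightarrow> 's) \<Rightarrow> 'a monomial \<Rightarrow> bool" where
  "mono_sat I \<sigma> None = False"
| "mono_sat I \<sigma> (Some L) = (\<forall>l\<in>L. sat I \<sigma> (lit_formula l))"

fun mono_fin :: "'a monomial \<Rightarrow> bool" where
  "mono_fin None = True"
| "mono_fin (Some L) = finite L"

lemma sat_neg_lit: "sat I \<sigma> (lit_formula (neg_lit l)) = (\<not> sat I \<sigma> (lit_formula l))"
  by (cases l) auto

lemma mono_sat_smart: "mono_sat I \<sigma> (smart_conj \<mu> \<nu>) = (mono_sat I \<sigma> \<mu> \<and> mono_sat I \<sigma> \<nu>)"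
proof (cases \<mu>)
  case None then show ?thesis by simp
next
  case (Some L) note L = this
  show ?thesis
  proof (cases \<nu>)
    case None then show ?thesis using L by simp
  next
    case (Some M)
    show ?thesis
    proof (cases "\<exists>l \<in> L \<union> M. neg_lit l \<in> L \<union> M")
      case True
      then obtain l where "l \<in> L \<union> M" "neg_lit l \<in> L \<union> M" by blast
      then have "\<not> ((\<forall>l\<in>L. sat I \<sigma> (lit_formula l)) \<and> (\<forall>l\<in>M. sat I \<sigma> (lit_formula l)))"
        using sat_neg_lit[of I \<sigma> l] by blast
      then show ?thesis using L Some True by simp
    next
      case False
      then show ?thesis using L Some by auto
    qed
  qed
qed

lemma mono_fin_smart: "mono_fin \<mu> \<Longrightarrow> mono_fin \<nu> \<Longrightarrow> mono_fin (smart_conj \<mu> \<nu>)"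
  by (cases \<mu>; cases \<nu>) auto

lemma sat_Theta_mono: "mono_fin \<mu> \<Longrightarrow> sat I \<sigma> (Theta_mono \<mu>) = mono_sat I \<sigma> \<mu>"
  by (cases \<mu>) (auto simp: sat_big_and enum_set_ok)

lemma sat_conj_formula: "finite A \<Longrightarrow> sat I \<sigma> (conj_formula A) = (\<forall>\<psi>\<in>A. sat I \<sigma> \<psi>)"
  by (simp add: conj_formula_def sat_big_and enum_set_ok)

definition goodLF :: "('a monomial \<times> 'a fconj) set \<Rightarrow> bool" where
  "goodLF S = (finite S \<and> (\<forall>(\<mu>, A)\<in>S. mono_fin \<mu> \<and> finite A))"

definition holdsLF where
  "holdsLF I \<sigma> S = (\<exists>(\<mu>, A)\<in>S. mono_sat I \<sigma> \<mu> \<and> (\<forall>\<psi>\<in>A. sat I (suffix 1 \<sigma>) \<psi>))"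

lemma sat_Theta_LF: "goodLF S \<Longrightarrow> sat I \<sigma> (Theta_LF S) = holdsLF I \<sigma> S"
proof -
  assume g: "goodLF S"
  have fS: "finite S" using g by (simp add: goodLF_def)
  have e: "sat I \<sigma> (case x of (\<mu>, A) \<Rightarrow> And (Theta_mono \<mu>) (Next (conj_formula A)))
     = (case x of (\<mu>, A) \<Rightarrow> mono_sat I \<sigma> \<mu> \<and> (\<forall>\<psi>\<in>A. sat I (suffix 1 \<sigma>) \<psi>))"
    if "x \<in> S" for x
  proof -
    obtain \<mu> A where x: "x = (\<mu>, A)" by (cases x)
    then have "mono_fin \<mu>" "finite A" using g that by (auto simp: goodLF_def)
    then show ?thesis using x by (simp add: sat_Theta_mono sat_conj_formula)
  qed
  have "sat I \<sigma> (Theta_LF S) = (\<exists>x\<in>S. sat I \<sigma> (case x of (\<mu>, A) \<Rightarrow> And (Theta_mono \<mu>) (Next (conj_formula A))))"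
    unfolding Theta_LF_def by (simp add: sat_big_or enum_set_ok[OF fS])
  also have "\<dots> = holdsLF I \<sigma> S" unfolding holdsLF_def using e by (simp cong: bex_cong)
  finally show ?thesis .
qed

lemma simp_fin: "finite (simp_ltl \<phi>) \<and> (\<forall>A\<in>simp_ltl \<phi>. finite A)"
proof (induction \<phi> rule: simp_ltl.induct)
  case (1 \<phi> \<psi>)
  have "simp_ltl (And \<phi> \<psi>) = (\<lambda>(A, B). A \<union> B) ` (simp_ltl \<phi> \<times> simp_ltl \<psi>)" by auto
  then show ?case using 1 by auto
qed (auto simp: fc_def)

lemma simp_sem: "sat I \<sigma> \<phi> = (\<exists>A\<in>simp_ltl \<phi>. \<forall>\<psi>\<in>A. sat I \<sigma> \<psi>)"
proof (induction \<phi> rule: simp_ltl.induct)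
  case (1 \<phi> \<psi>)
  then show ?case by auto
qed (auto simp: fc_def)

lemma LF_good: "goodLF (LF \<phi>)"
proof (induction \<phi>)
  case (And \<phi>1 \<phi>2)
  have s1: "LF (And \<phi>1 \<phi>2) \<subseteq> (\<lambda>((\<mu>, A), (\<nu>, B)). (smart_conj \<mu> \<nu>, A \<union> B)) ` (LF \<phi>1 \<times> LF \<phi>2)"
    by force
  have s2: "\<forall>(\<mu>, A)\<in>LF (And \<phi>1 \<phi>2). mono_fin \<mu> \<and> finite A"
    using And unfolding goodLF_def by (fastforce intro: mono_fin_smart)
  show ?case
  proof -
    have "finite (LF \<phi>1 \<times> LF \<phi>2)" using And by (simp add: goodLF_def)
    with s1 have "finite (LF (And \<phi>1 \<phi>2))" by (rule finite_subset[OF _ finite_imageI])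
    with s2 show ?thesis by (simp add: goodLF_def)
  qed
next
  case (Or \<phi>1 \<phi>2)
  then show ?case unfolding goodLF_def by auto
next
  case (Next \<phi>)
  have "LF (Next \<phi>) = (\<lambda>A. (Some {}, A)) ` simp_ltl \<phi>" by auto
  then show ?case using simp_fin[of \<phi>] unfolding goodLF_def by auto
next
  case (Until \<phi>1 \<phi>2)
  have "LF (Until \<phi>1 \<phi>2) = LF \<phi>2 \<union> (\<lambda>(\<mu>, A). (\<mu>, A \<union> {Until \<phi>1 \<phi>2})) ` LF \<phi>1" by auto
  then show ?case using Until unfolding goodLF_def by auto
next
  case (Release \<phi>1 \<phi>2)
  have s1: "LF (Release \<phi>1 \<phi>2) \<subseteq> (\<lambda>((\<mu>, A), (\<nu>, B)). (smart_conj \<mu> \<nu>, A \<union> B)) ` (LF \<phi>1 \<times> LF \<phi>2)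
     \<union> (\<lambda>(\<nu>, B). (\<nu>, B \<union> {Release \<phi>1 \<phi>2})) ` LF \<phi>2"
    by force
  have s2: "\<forall>(\<mu>, A)\<in>LF (Release \<phi>1 \<phi>2). mono_fin \<mu> \<and> finite A"
    using Release unfolding goodLF_def by (fastforce intro: mono_fin_smart)
  show ?case
  proof -
    have "finite (LF \<phi>1 \<times> LF \<phi>2)" "finite (LF \<phi>2)" using Release by (simp_all add: goodLF_def)
    then have "finite ((\<lambda>((\<mu>, A), (\<nu>, B)). (smart_conj \<mu> \<nu>, A \<union> B)) ` (LF \<phi>1 \<times> LF \<phi>2)
     \<union> (\<lambda>(\<nu>, B). (\<nu>, B \<union> {Release \<phi>1 \<phi>2})) ` LF \<phi>2)" by blast
    with s1 have "finite (LF (Release \<phi>1 \<phi>2))" by (rule finite_subset)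
    with s2 show ?thesis by (simp add: goodLF_def)
  qed
qed (auto simp: goodLF_def)

lemma suffix_suffix: "suffix j (suffix k \<sigma>) = suffix (j + k) \<sigma>"
  by (simp add: suffix_def add.assoc)

lemma suffix_0: "suffix 0 \<sigma> = \<sigma>"
  by (simp add: suffix_def)

lemma until_unfold: "sat I \<sigma> (Until \<phi> \<psi>) =
   (sat I \<sigma> \<psi> \<or> (sat I \<sigma> \<phi> \<and> sat I (suffix 1 \<sigma>) (Until \<phi> \<psi>)))"
proof
  assume "sat I \<sigma> (Until \<phi> \<psi>)"
  then obtain j where j: "sat I (suffix j \<sigma>) \<psi>" "\<forall>k<j. sat I (suffix k \<sigma>) \<phi>" by auto
  show "sat I \<sigma> \<psi> \<or> (sat I \<sigma> \<phi> \<and> sat I (suffix 1 \<sigma>) (Until \<phi> \<psi>))"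
  proof (cases j)
    case 0 then show ?thesis using j by (simp add: suffix_0)
  next
    case (Suc m)
    have "sat I (suffix m (suffix 1 \<sigma>)) \<psi>" using j Suc by (simp add: suffix_suffix)
    moreover have "\<forall>k<m. sat I (suffix k (suffix 1 \<sigma>)) \<phi>" using j Suc by (simp add: suffix_suffix)
    moreover have "sat I \<sigma> \<phi>" using j(2) Suc by (metis suffix_0 zero_less_Suc)
    ultimately show ?thesis by auto
  qed
next
  assume a: "sat I \<sigma> \<psi> \<or> (sat I \<sigma> \<phi> \<and> sat I (suffix 1 \<sigma>) (Until \<phi> \<psi>))"
  show "sat I \<sigma> (Until \<phi> \<psi>)"
  proof (cases "sat I \<sigma> \<psi>")
    case True then show ?thesis by (intro sat.simps(8)[THEN iffD2] exI[of _ 0]) (simp add: suffix_0)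
  next
    case False
    then obtain j where j: "sat I (suffix j (suffix 1 \<sigma>)) \<psi>" "\<forall>k<j. sat I (suffix k (suffix 1 \<sigma>)) \<phi>"
      and p: "sat I \<sigma> \<phi>" using a by auto
    have "\<forall>k<Suc j. sat I (suffix k \<sigma>) \<phi>"
    proof (intro allI impI)
      fix k assume "k < Suc j"
      then show "sat I (suffix k \<sigma>) \<phi>" using j(2) p
        by (cases k) (auto simp: suffix_suffix suffix_0)
    qed
    then show ?thesis using j(1) by (auto simp: suffix_suffix intro!: exI[of _ "Suc j"])
  qed
qed

lemma release_unfold: "sat I \<sigma> (Release \<phi> \<psi>) =
   ((sat I \<sigma> \<phi> \<and> sat I \<sigma> \<psi>) \<or> (sat I \<sigma> \<psi> \<and> sat I (suffix 1 \<sigma>) (Release \<phi> \<psi>)))"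
proof
  assume a: "sat I \<sigma> (Release \<phi> \<psi>)"
  have psi: "sat I \<sigma> \<psi>" using a by (auto simp: suffix_0 dest: spec[of _ 0])
  show "(sat I \<sigma> \<phi> \<and> sat I \<sigma> \<psi>) \<or> (sat I \<sigma> \<psi> \<and> sat I (suffix 1 \<sigma>) (Release \<phi> \<psi>))"
  proof (cases "sat I \<sigma> \<phi>")
    case True then show ?thesis using psi by auto
  next
    case False
    have "sat I (suffix 1 \<sigma>) (Release \<phi> \<psi>)"
    proof (simp only: sat.simps, intro allI)
      fix j
      from a have "sat I (suffix (Suc j) \<sigma>) \<psi> \<or> (\<exists>k<Suc j. sat I (suffix k \<sigma>) \<phi>)" by simp
      then show "sat I (suffix j (suffix 1 \<sigma>)) \<psi> \<or> (\<exists>k<j. sat I (suffix k (suffix 1 \<sigma>)) \<phi>)"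
      proof
        assume "\<exists>k<Suc j. sat I (suffix k \<sigma>) \<phi>"
        then obtain k where k: "k < Suc j" "sat I (suffix k \<sigma>) \<phi>" by auto
        then obtain m where "k = Suc m" using False by (cases k) (auto simp: suffix_0)
        then show ?thesis using k by (auto simp: suffix_suffix)
      qed (simp add: suffix_suffix)
    qed
    then show ?thesis using psi by auto
  qed
next
  assume a: "(sat I \<sigma> \<phi> \<and> sat I \<sigma> \<psi>) \<or> (sat I \<sigma> \<psi> \<and> sat I (suffix 1 \<sigma>) (Release \<phi> \<psi>))"
  show "sat I \<sigma> (Release \<phi> \<psi>)"
  proof (simp only: sat.simps, intro allI)
    fix j
    show "sat I (suffix j \<sigma>) \<psi> \<or> (\<exists>k<j. sat I (suffix k \<sigma>) \<phi>)"
    proof (cases j)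
      case 0 then show ?thesis using a by (auto simp: suffix_0)
    next
      case (Suc m)
      show ?thesis
      proof (cases "sat I \<sigma> \<phi>")
        case True then show ?thesis using Suc by (auto simp: suffix_0 intro!: exI[of _ 0])
      next
        case False
        then have "sat I (suffix m (suffix 1 \<sigma>)) \<psi> \<or> (\<exists>k<m. sat I (suffix k (suffix 1 \<sigma>)) \<phi>)"
          using a by auto
        then show ?thesis using Suc by (auto simp: suffix_suffix)
      qed
    qed
  qed
qed

lemma holds_conj:
  "holdsLF I \<sigma> {(smart_conj \<mu> \<nu>, A \<union> B) | \<mu> A \<nu> B.
        (\<mu>, A) \<in> S \<and> (\<nu>, B) \<in> T \<and> smart_conj \<mu> \<nu> \<noteq> None}
   = (holdsLF I \<sigma> S \<and> holdsLF I \<sigma> T)"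
proof
  assume "holdsLF I \<sigma> {(smart_conj \<mu> \<nu>, A \<union> B) | \<mu> A \<nu> B.
        (\<mu>, A) \<in> S \<and> (\<nu>, B) \<in> T \<and> smart_conj \<mu> \<nu> \<noteq> None}"
  then obtain x where x: "x \<in> {(smart_conj \<mu> \<nu>, A \<union> B) | \<mu> A \<nu> B.
        (\<mu>, A) \<in> S \<and> (\<nu>, B) \<in> T \<and> smart_conj \<mu> \<nu> \<noteq> None}"
    "mono_sat I \<sigma> (fst x)" "\<forall>\<psi>\<in>snd x. sat I (suffix 1 \<sigma>) \<psi>"
    unfolding holdsLF_def case_prod_beta by blast
  from x(1) obtain \<mu> A \<nu> B where m: "x = (smart_conj \<mu> \<nu>, A \<union> B)" "(\<mu>, A) \<in> S" "(\<nu>, B) \<in> T"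
    by blast
  have "mono_sat I \<sigma> \<mu>" "mono_sat I \<sigma> \<nu>" using x(2) m(1) mono_sat_smart by auto
  then show "holdsLF I \<sigma> S \<and> holdsLF I \<sigma> T" using m x(3) unfolding holdsLF_def by auto
next
  assume "holdsLF I \<sigma> S \<and> holdsLF I \<sigma> T"
  then obtain \<mu> A \<nu> B where m: "(\<mu>, A) \<in> S" "(\<nu>, B) \<in> T" "mono_sat I \<sigma> \<mu>" "mono_sat I \<sigma> \<nu>"
      "\<forall>\<psi>\<in>A. sat I (suffix 1 \<sigma>) \<psi>" "\<forall>\<psi>\<in>B. sat I (suffix 1 \<sigma>) \<psi>"
    unfolding holdsLF_def by auto
  have ms: "mono_sat I \<sigma> (smart_conj \<mu> \<nu>)" using m(3,4) mono_sat_smart[of I \<sigma> \<mu> \<nu>] by blast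
  then have "smart_conj \<mu> \<nu> \<noteq> None" by (metis mono_sat.simps(1))
  then have mem: "(smart_conj \<mu> \<nu>, A \<union> B) \<in> {(smart_conj \<mu> \<nu>, A \<union> B) | \<mu> A \<nu> B.
        (\<mu>, A) \<in> S \<and> (\<nu>, B) \<in> T \<and> smart_conj \<mu> \<nu> \<noteq> None}" using m by blast
  then show "holdsLF I \<sigma> {(smart_conj \<mu> \<nu>, A \<union> B) | \<mu> A \<nu> B.
        (\<mu>, A) \<in> S \<and> (\<nu>, B) \<in> T \<and> smart_conj \<mu> \<nu> \<noteq> None}"
    unfolding holdsLF_def using ms m by (intro bexI[OF _ mem]) auto
qed

lemma holds_add:
  "holdsLF I \<sigma> {(\<mu>, A \<union> {\<chi>}) | \<mu> A. (\<mu>, A) \<in> S}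
   = (holdsLF I \<sigma> S \<and> sat I (suffix 1 \<sigma>) \<chi>)"
proof
  assume "holdsLF I \<sigma> {(\<mu>, A \<union> {\<chi>}) | \<mu> A. (\<mu>, A) \<in> S}"
  then obtain x where x: "x \<in> {(\<mu>, A \<union> {\<chi>}) | \<mu> A. (\<mu>, A) \<in> S}"
    "mono_sat I \<sigma> (fst x)" "\<forall>\<psi>\<in>snd x. sat I (suffix 1 \<sigma>) \<psi>"
    unfolding holdsLF_def case_prod_beta by blast
  from x(1) obtain \<mu> A where m: "x = (\<mu>, A \<union> {\<chi>})" "(\<mu>, A) \<in> S" by blast
  show "holdsLF I \<sigma> S \<and> sat I (suffix 1 \<sigma>) \<chi>" using m x unfolding holdsLF_def by auto
next
  assume "holdsLF I \<sigma> S \<and> sat I (suffix 1 \<sigma>) \<chi>"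
  then obtain \<mu> A where m: "(\<mu>, A) \<in> S" "mono_sat I \<sigma> \<mu>"
      "\<forall>\<psi>\<in>A. sat I (suffix 1 \<sigma>) \<psi>" "sat I (suffix 1 \<sigma>) \<chi>"
    unfolding holdsLF_def by auto
  have "(\<mu>, A \<union> {\<chi>}) \<in> {(\<mu>, A \<union> {\<chi>}) | \<mu> A. (\<mu>, A) \<in> S}" using m by blast
  then show "holdsLF I \<sigma> {(\<mu>, A \<union> {\<chi>}) | \<mu> A. (\<mu>, A) \<in> S}"
    unfolding holdsLF_def using m by auto
qed

lemma holds_Un: "holdsLF I \<sigma> (S \<union> T) = (holdsLF I \<sigma> S \<or> holdsLF I \<sigma> T)"
  unfolding holdsLF_def by blast

lemma holds_Next: "holdsLF I \<sigma> {(Some {}, A) | A. A \<in> S} = (\<exists>A\<in>S. \<forall>\<psi>\<in>A. sat I (suffix 1 \<sigma>) \<psi>)"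
  unfolding holdsLF_def by auto

lemma holds_LF: "holdsLF I \<sigma> (LF \<phi>) = sat I \<sigma> \<phi>"
proof (induction \<phi> arbitrary: \<sigma>)
  case (And \<phi>1 \<phi>2)
  show ?case by (simp only: LF.simps holds_conj And.IH sat.simps)
next
  case (Or \<phi>1 \<phi>2)
  show ?case by (simp only: LF.simps holds_Un Or.IH sat.simps)
next
  case (Next \<phi>)
  show ?case by (simp only: LF.simps holds_Next sat.simps simp_sem[of I "suffix 1 \<sigma>" \<phi>])
next
  case (Until \<phi>1 \<phi>2)
  show ?case
    by (simp only: LF.simps holds_Un holds_add Until.IH until_unfold[of I \<sigma> \<phi>1 \<phi>2])
next
  case (Release \<phi>1 \<phi>2)
  show ?case
    by (simp only: LF.simps holds_Un holds_add holds_conj Release.IH release_unfold[of I \<sigma> \<phi>1 \<phi>2])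
qed (auto simp: holdsLF_def)

theorem theorem2:
  fixes \<phi> :: "'a ltl"
  shows "\<forall>(I :: 's \<Rightarrow> 'a set) (\<sigma> :: nat \<Rightarrow> 's). sat I \<sigma> (Theta_LF (LF \<phi>)) = sat I \<sigma> \<phi>"
  using sat_Theta_LF[OF LF_good] holds_LF by blast

end
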